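(* Let $\Gamma$ be a lattice satisfying the standing assumptions below, and let $\mathcal{F}=\{f\in C_2(\Gamma): |\iota(f)|=1\}$. Let $f,f'\in\mathcal{F}$ and let $\rho=(f_1=f,f_2,\dots,f_m=f')$ be a face path from $f$ to $f'$ with $m\ge 2$. Then the operator $W^Z_{f,f'}(\rho)=\prod_{i=1}^m Z_{f_i}$ commutes with every element of the stabilizer group of the 3D toric code on $\Gamma$, i.e. it is either a stabilizer or a logical operator.
   Context: $\Gamma$ is a finite, connected three-dimensional cell complex (lattice) with vertices $C_0(\Gamma)$, edges $C_1(\Gamma)$ (partial edges, incident on only one vertex, are allowed at the boundary), faces $C_2(\Gamma)$ and volumes $C_3(\Gamma)$. For a face $f$, $\partial(f)$ is its set of boundary edges; for a volume $\nu$, $\partial(\nu)$ is its set of boundary faces; for an edge $e$, $\iota(e)$ is the set of faces $f$ with $e\in\partial(f)$; for a face $f$, $\iota(f)$ is the set of volumes $\nu$ with $f\in\partial(\nu)$. Every face lies in the boundary of at most two volumes. Standing assumptions: (L1) $\Gamma$ has no boundaries in its interior; (L2) the boundary of every face of $\Gamma$ and of every face of the dual complex $\Gamma^*$ is either a closed path or an open path beginning and ending with partial edges; the dual complex is connected. The 3D toric code on $\Gamma$ places one qubit on each face; its stabilizer group is generated by $B_e=\prod_{f\in\iota(e)}Z_f$ for $e\in C_1(\Gamma)$ and $A_\nu=\prod_{f\in\partial(\nu)}X_f$ for $\nu\in C_3(\Gamma)$. A logical operator is a Pauli operator commuting with all stabilizers but not itself in the stabilizer group (up to phase). A face path is a sequence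 of faces $\rho=(f_1,\dots,f_m)$ together with a sequence of pairwise distinct volumes $\Lambda(\rho)=(\nu_1,\dots,\nu_{m-1})$ such that $f_i,f_{i+1}\in\partial(\nu_i)$ for all $i$; it is a face path from $f_1$ to $f_m$. *)

theory Defs
  imports Main
begin

text \<open>A finite three-dimensional cell complex is given by finite sets of vertices V,
  edges E, faces F and volumes C (of four arbitrary types), together with incidence maps:
  vert e = endpoints of edge e (one endpoint for a partial edge),
  bd2 f = boundary edges of face f, bd3 c = boundary faces of volume c.\<close>

definition coface1 :: "'f set \<Rightarrow> ('f \<Rightarrow> 'e set) \<Rightarrow> 'e \<Rightarrow> 'f set" where
  "coface1 F bd2 e = {f \<in> F. e \<in> bd2 f}"

definition coface2 :: "'c set \<Rightarrow> ('c \<Rightarrow> 'f set) \<Rightarrow> 'f \<Rightarrow> 'c set" where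
  "coface2 C bd3 f = {c \<in> C. f \<in> bd3 c}"

definition is_path_set :: "'a set \<Rightarrow> ('a \<Rightarrow> 'a \<Rightarrow> bool) \<Rightarrow> ('a \<Rightarrow> bool) \<Rightarrow> bool" where
  "is_path_set S adj partial \<longleftrightarrow>
     (\<exists>xs. xs \<noteq> [] \<and> distinct xs \<and> set xs = S \<and>
        (\<forall>i. Suc i < length xs \<longrightarrow> adj (xs ! i) (xs ! Suc i)) \<and>
        (adj (last xs) (hd xs) \<or> (partial (hd xs) \<and> partial (last xs))))"

definition lattice3 ::
  "'v set \<Rightarrow> 'e set \<Rightarrow> 'f set \<Rightarrow> 'c set \<Rightarrow>
   ('e \<Rightarrow> 'v set) \<Rightarrow> ('f \<Rightarrow> 'e set) \<Rightarrow> ('c \<Rightarrow> 'f set) \<Rightarrow> bool" where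
  "lattice3 V E F C vert bd2 bd3 \<longleftrightarrow>
     finite V \<and> finite E \<and> finite F \<and> finite C \<and>
     (\<forall>e\<in>E. vert e \<subseteq> V \<and> (card (vert e) = 1 \<or> card (vert e) = 2)) \<and>
     (\<forall>f\<in>F. bd2 f \<subseteq> E) \<and>
     (\<forall>c\<in>C. bd3 c \<subseteq> F) \<and>
     \<comment> \<open>every face lies in the boundary of at most two volumes\<close>
     (\<forall>f\<in>F. card (coface2 C bd3 f) \<le> 2) \<and>
     \<comment> \<open>Gamma is connected (via its 1-skeleton, every edge touching some vertex)\<close>
     V \<noteq> {} \<and>
     (\<forall>u\<in>V. \<forall>w\<in>V. (u, w) \<in> {(a, b). \<exists>e\<in>E. a \<in> vert e \<and> b \<in> vert e}\<^sup>*) \<and>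
     \<comment> \<open>(L2) boundary of every face is a closed path, or an open path beginning and
         ending with partial edges\<close>
     (\<forall>f\<in>F. is_path_set (bd2 f) (\<lambda>e1 e2. vert e1 \<inter> vert e2 \<noteq> {})
                         (\<lambda>e. card (vert e) = 1)) \<and>
     \<comment> \<open>(L2) for the dual complex: the dual face of edge e has boundary the dual edges of
         the faces in iota(e); dual edges are adjacent iff the faces share a volume, and the dual
         edge of f is partial iff f lies in exactly one volume\<close>
     (\<forall>e\<in>E. is_path_set (coface1 F bd2 e)
                         (\<lambda>f1 f2. coface2 C bd3 f1 \<inter> coface2 C bd3 f2 \<noteq> {})
                         (\<lambda>f. card (coface2 C bd3 f) = 1)) \<and>
     \<comment> \<open>the dual complex is connected\<close>
     (\<forall>c1\<in>C. \<forall>c2\<in>C. (c1, c2) \<in> {(a, b). \<exists>f\<in>F. f \<in> bd3 a \<and> f \<in> bd3 b}\<^sup>*)"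

text \<open>Pauli operators on the face qubits, modulo phase, in the binary symplectic
  representation: (X-support, Z-support).\<close>
type_synonym 'f pauli = "'f set \<times> 'f set"

definition symdiff :: "'a set \<Rightarrow> 'a set \<Rightarrow> 'a set" where
  "symdiff A B = (A - B) \<union> (B - A)"

definition pmul :: "'f pauli \<Rightarrow> 'f pauli \<Rightarrow> 'f pauli" where
  "pmul P Q = (symdiff (fst P) (fst Q), symdiff (snd P) (snd Q))"

text \<open>Two Pauli operators commute iff they anticommute on an even number of qubits.\<close>
definition pcommute :: "'f pauli \<Rightarrow> 'f pauli \<Rightarrow> bool" where
  "pcommute P Q \<longleftrightarrow> even (card (fst P \<inter> snd Q) + card (snd P \<inter> fst Q))"

definition B_op :: "'f set \<Rightarrow> ('f \<Rightarrow> 'e set) \<Rightarrow> 'e \<Rightarrow> 'f pauli" where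
  "B_op F bd2 e = ({}, coface1 F bd2 e)"

definition A_op :: "('c \<Rightarrow> 'f set) \<Rightarrow> 'c \<Rightarrow> 'f pauli" where
  "A_op bd3 c = (bd3 c, {})"

inductive_set stab_group :: "'e set \<Rightarrow> 'f set \<Rightarrow> 'c set \<Rightarrow> ('f \<Rightarrow> 'e set) \<Rightarrow>
     ('c \<Rightarrow> 'f set) \<Rightarrow> 'f pauli set"
  for E F C bd2 bd3 where
  stab_id: "({}, {}) \<in> stab_group E F C bd2 bd3"
| stab_B: "P \<in> stab_group E F C bd2 bd3 \<Longrightarrow> e \<in> E \<Longrightarrow>
            pmul (B_op F bd2 e) P \<in> stab_group E F C bd2 bd3"
| stab_A: "P \<in> stab_group E F C bd2 bd3 \<Longrightarrow> c \<in> C \<Longrightarrow>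
            pmul (A_op bd3 c) P \<in> stab_group E F C bd2 bd3"

definition face_path :: "'f set \<Rightarrow> 'c set \<Rightarrow> ('c \<Rightarrow> 'f set) \<Rightarrow> 'f list \<Rightarrow> 'c list \<Rightarrow> bool" where
  "face_path F C bd3 fs cs \<longleftrightarrow>
     fs \<noteq> [] \<and> length cs = length fs - 1 \<and> set fs \<subseteq> F \<and> set cs \<subseteq> C \<and> distinct cs \<and>
     (\<forall>i < length cs. fs ! i \<in> bd3 (cs ! i) \<and> fs ! Suc i \<in> bd3 (cs ! i))"

text \<open>W^Z(rho) = prod_i Z_{f_i} (repeated factors cancel).\<close>
definition WZ :: "'f list \<Rightarrow> 'f pauli" where
  "WZ fs = ({}, {f. odd (count_list fs f)})"

end

theory Submission
  imports Defs
begin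

lemma parity_filter:
  "even (card ({g. odd (count_list xs g)} \<inter> A)) \<longleftrightarrow> even (length (filter (\<lambda>g. g \<in> A) xs))"
proof (induction xs)
  case Nil
  then show ?case by simp
next
  case (Cons x xs)
  let ?Z = "{g. odd (count_list xs g)} \<inter> A"
  let ?Z' = "{g. odd (count_list (x#xs) g)} \<inter> A"
  have fin: "finite ?Z"
    by (rule finite_subset[of _ "set xs"]) (use count_notin in fastforce, simp)
  show ?case
  proof (cases "x \<in> A")
    case False
    then have "?Z' = ?Z" by auto
    then show ?thesis using Cons False by simp
  next
    case True
    show ?thesis
    proof (cases "x \<in> ?Z")
      case T: True
      then have "?Z' = ?Z - {x}" by auto
      then have "card ?Z' = card ?Z - 1" using T fin by simp
      moreover have "card ?Z > 0" using T fin card_gt_0_iff by blast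
      ultimately show ?thesis using Cons True by auto
    next
      case N: False
      then have "?Z' = insert x ?Z" using True by auto
      then have "card ?Z' = Suc (card ?Z)" using N fin by simp
      then show ?thesis using Cons True by auto
    qed
  qed
qed

lemma card_symdiff_parity:
  assumes "finite Z"
  shows "even (card (Z \<inter> symdiff A B)) \<longleftrightarrow> (even (card (Z \<inter> A)) \<longleftrightarrow> even (card (Z \<inter> B)))"
proof -
  have fa: "finite (Z \<inter> A)" "finite (Z \<inter> B)" "finite (Z \<inter> A \<inter> B)" using assms by auto
  have e1: "Z \<inter> symdiff A B = (Z \<inter> A - Z \<inter> A \<inter> B) \<union> (Z \<inter> B - Z \<inter> A \<inter> B)"
    unfolding symdiff_def by auto
  have c1: "card (Z \<inter> symdiff A B) = card (Z \<inter> A - Z \<inter> A \<inter> B) + card (Z \<inter> B - Z \<inter> A \<inter> B)"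
    unfolding e1 by (rule card_Un_disjoint) (use fa in auto)
  have c2: "card (Z \<inter> A - Z \<inter> A \<inter> B) = card (Z \<inter> A) - card (Z \<inter> A \<inter> B)"
    by (rule card_Diff_subset) (use fa in auto)
  have c3: "card (Z \<inter> B - Z \<inter> A \<inter> B) = card (Z \<inter> B) - card (Z \<inter> A \<inter> B)"
    by (rule card_Diff_subset) (use fa in auto)
  have l1: "card (Z \<inter> A \<inter> B) \<le> card (Z \<inter> A)" by (rule card_mono) (use fa in auto)
  have l2: "card (Z \<inter> A \<inter> B) \<le> card (Z \<inter> B)" by (rule card_mono) (use fa in auto)
  show ?thesis using c1 c2 c3 l1 l2 by auto
qed

theorem lemma1:
  fixes V :: "'v set" and E :: "'e set" and F :: "'f set" and C :: "'c set"
    and vert :: "'e \<Rightarrow> 'v set" and bd2 :: "'f \<Rightarrow> 'e set" and bd3 :: "'c \<Rightarrow> 'f set"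
    and f f' :: 'f and fs :: "'f list" and cs :: "'c list"
  assumes "lattice3 V E F C vert bd2 bd3"
    and "f \<in> F" and "card (coface2 C bd3 f) = 1"
    and "f' \<in> F" and "card (coface2 C bd3 f') = 1"
    and "face_path F C bd3 fs cs" and "hd fs = f" and "last fs = f'" and "length fs \<ge> 2"
  shows "\<forall>S \<in> stab_group E F C bd2 bd3. pcommute (WZ fs) S"
proof -
  let ?m = "length fs"
  let ?Z = "{g. odd (count_list fs g)}"
  have finC: "finite C" and two: "\<forall>g\<in>F. card (coface2 C bd3 g) \<le> 2"
    using assms(1) unfolding lattice3_def by auto
  have fp: "length cs = ?m - 1" "set fs \<subseteq> F" "set cs \<subseteq> C" "distinct cs"
    "\<And>i. i < length cs \<Longrightarrow> fs ! i \<in> bd3 (cs ! i) \<and> fs ! Suc i \<in> bd3 (cs ! i)"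
    using assms(6) unfolding face_path_def by auto
  have finZ: "finite ?Z"
    by (rule finite_subset[of _ "set fs"]) (use count_notin in fastforce, simp)
  have cofin: "finite (coface2 C bd3 g)" for g using finC unfolding coface2_def by auto
  have csC: "\<And>k. k < length cs \<Longrightarrow> cs ! k \<in> C" using fp(3) by auto
  have cof: "\<exists>k < length cs. c = cs ! k \<and> (k = i \<or> Suc k = i)"
    if i: "i < ?m" and c: "c \<in> C" "fs ! i \<in> bd3 c" for i c
  proof -
    have cin: "c \<in> coface2 C bd3 (fs ! i)" using c unfolding coface2_def by auto
    have fsF: "fs ! i \<in> F" using fp(2) i by auto
    show ?thesis
    proof (cases "i = 0")
      case True
      have h: "fs ! 0 = f" using assms(7) assms(9) by (metis hd_conv_nth list.size(3) not_numeral_le_zero)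
      have "cs ! 0 \<in> coface2 C bd3 (fs ! i)" using fp(5)[of 0] csC[of 0] fp(1) assms(9) True
        unfolding coface2_def by auto
      moreover have "card (coface2 C bd3 (fs ! i)) = 1" using True h assms(3) by simp
      ultimately have "c = cs ! 0" using cin by (metis card_1_singletonE singletonD)
      then show ?thesis using True fp(1) assms(9) by auto
    next
      case False
      then obtain j where j: "i = Suc j" by (cases i) auto
      have A: "cs ! j \<in> coface2 C bd3 (fs ! i)" using fp(5)[of j] csC[of j] fp(1) i j
        unfolding coface2_def by auto
      show ?thesis
      proof (cases "i < length cs")
        case True
        have B: "cs ! i \<in> coface2 C bd3 (fs ! i)" using fp(5)[of i] csC[of i] True
          unfolding coface2_def by auto
        have ne: "cs ! i \<noteq> cs ! j" using fp(4) True j nth_eq_iff_index_eq by fastforce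
        have sub: "{cs ! i, cs ! j} \<subseteq> coface2 C bd3 (fs ! i)" using A B by auto
        have "card {cs ! i, cs ! j} = 2" using ne by simp
        then have "coface2 C bd3 (fs ! i) = {cs ! i, cs ! j}"
        proof -
          have "card (coface2 C bd3 (fs ! i)) \<le> card {cs ! i, cs ! j}"
            using two fsF \<open>card {cs ! i, cs ! j} = 2\<close> by simp
          then show ?thesis using card_seteq[OF cofin sub] by simp
        qed
        then show ?thesis using cin True j by (auto intro: exI[of _ j])
      next
        case False
        then have ii: "i = ?m - 1" using i fp(1) by auto
        have h: "fs ! i = f'" using assms(8) assms(9) ii by (metis last_conv_nth list.size(3) not_numeral_le_zero)
        have "card (coface2 C bd3 (fs ! i)) = 1" using h assms(5) by simp
        then have "c = cs ! j" using cin A by (metis card_1_singletonE singletonD)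
        then show ?thesis using j i fp(1) by (auto intro: exI[of _ j])
      qed
    qed
  qed
  have volA: "even (card (?Z \<inter> bd3 c))" if c: "c \<in> C" for c
  proof -
    have L: "length (filter (\<lambda>g. g \<in> bd3 c) fs) = card {i. i < ?m \<and> fs ! i \<in> bd3 c}"
      by (simp add: length_filter_conv_card)
    have "even (card {i. i < ?m \<and> fs ! i \<in> bd3 c})"
    proof (cases "c \<in> set cs")
      case False
      have "{i. i < ?m \<and> fs ! i \<in> bd3 c} = {}"
        using cof c False by (metis (no_types, lifting) empty_Collect_eq nth_mem)
      then show ?thesis by (metis card.empty even_zero)
    next
      case True
      then obtain j where j: "j < length cs" "cs ! j = c" by (metis in_set_conv_nth)
      have "{i. i < ?m \<and> fs ! i \<in> bd3 c} = {j, Suc j}"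
      proof
        show "{j, Suc j} \<subseteq> {i. i < ?m \<and> fs ! i \<in> bd3 c}"
          using fp(5)[of j] j fp(1) by auto
        show "{i. i < ?m \<and> fs ! i \<in> bd3 c} \<subseteq> {j, Suc j}"
        proof
          fix i assume "i \<in> {i. i < ?m \<and> fs ! i \<in> bd3 c}"
          then obtain k where k: "k < length cs" "c = cs ! k" "k = i \<or> Suc k = i"
            using cof c by blast
          then have "k = j" using j fp(4) nth_eq_iff_index_eq by metis
          then show "i \<in> {j, Suc j}" using k by auto
        qed
      qed
      then show ?thesis by simp
    qed
    then show ?thesis using parity_filter[of fs "bd3 c"] L by simp
  qed
  show ?thesis
  proof
    fix S assume "S \<in> stab_group E F C bd2 bd3"
    then have "even (card (?Z \<inter> fst S))"
    proof (induction rule: stab_group.induct)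
      case stab_id
      then show ?case by simp
    next
      case (stab_B P e)
      then show ?case by (simp add: pmul_def B_op_def symdiff_def)
    next
      case (stab_A P c)
      then show ?case using card_symdiff_parity[OF finZ, of "bd3 c" "fst P"] volA[OF stab_A(2)]
        by (simp add: pmul_def A_op_def)
    qed
    then show "pcommute (WZ fs) S" by (simp add: pcommute_def WZ_def)
  qed
qed

end
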